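(* Let $d, C \ge 1$ be integers, let $\epsilon > 0$, and for each $c = 1, \dots, C$ let $\hat{Z}^c \in \mathbb{R}^{d \times n_c}$ with $n_c \ge 1$. Put $n = \sum_{c=1}^C n_c$ and let $\hat{Z} = [\hat{Z}^1, \hat{Z}^2, \dots, \hat{Z}^C] \in \mathbb{R}^{d \times n}$ be the horizontal concatenation. For a matrix $W \in \mathbb{R}^{d \times m}$ define the coding rate $$R(W, \epsilon) = \frac{1}{2} \log\det\Big(I_d + \frac{1}{m \epsilon} W W^\top\Big),$$ and define $$\mathrm{TrR} = R(\hat{Z}, \epsilon) - \sum_{c=1}^C \frac{n_c}{n} R(\hat{Z}^c, \epsilon).$$ Then: (i) $\mathrm{TrR} \ge 0$, and equality holds when $\frac{1}{n}\hat{Z}\hat{Z}^\top = \frac{1}{n_c}\hat{Z}^c (\hat{Z}^c)^\top$ for all $c = 1, \dots, C$. (ii) $$\mathrm{TrR} \le \frac{1}{2} \sum_{c=1}^{C} \left( \log\det\Big(I_d + \frac{1}{n \epsilon} \hat{Z}^c (\hat{Z}^c)^\top\Big) - \frac{n_c}{n} \log\det\Big(I_d + \frac{1}{n_c \epsilon} \hat{Z}^c (\hat{Z}^c)^\top\Big) \right),$$ and equality holds when $\hat{Z}^{c_1} (\hat{Z}^{c_2})^\top = 0$ for all $1 \le c_1 < c_2 \le C$.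
   Context: $I_d$ denotes the $d \times d$ identity matrix and $\log\det$ is the logarithm of the determinant (of a symmetric positive definite matrix). The columns of $\hat{Z}^c$ are thought of as feature vectors of the samples in class $c$; $\mathrm{TrR}$ is the paper's "TransRate" score. *)

theory Defs
  imports "HOL-Analysis.Analysis"
begin

text \<open>A d x m real matrix is represented by the list of its m columns,
  each a vector in real^'d (the dimension d is the finite type 'd).
  Horizontal concatenation of matrices is concatenation of column lists.\<close>

definition gram :: "(real^'d) list \<Rightarrow> real^'d^'d" where
  "gram W = (\<chi> i j. \<Sum>w\<leftarrow>W. w$i * w$j)"

definition coding_rate :: "(real^'d) list \<Rightarrow> real \<Rightarrow> real" where
  "coding_rate W eps =
     1/2 * ln (det (mat 1 + (1 / (real (length W) * eps)) *\<^sub>R gram W))"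

definition TrR :: "(real^'d) list list \<Rightarrow> real \<Rightarrow> real" where
  "TrR Zs eps =
     coding_rate (concat Zs) eps
     - (\<Sum>c<length Zs. real (length (Zs!c)) / real (length (concat Zs))
                        * coding_rate (Zs!c) eps)"

end

theory Submission
  imports Defs
begin

definition symm :: "real^'n^'n \<Rightarrow> bool" where
  "symm A \<longleftrightarrow> (\<forall>i j. A$i$j = A$j$i)"

lemma symm_transpose: "symm A \<longleftrightarrow> transpose A = A"
  by (auto simp: symm_def transpose_def vec_eq_iff)

lemma symm_inner: "symm A \<Longrightarrow> x \<bullet> (A *v y) = (A *v x) \<bullet> y"
  by (metis dot_lmul_matrix symm_transpose vector_transpose_matrix)

lemma mv_scaleR: fixes A :: "real^'n^'m" shows "A *v (k *\<^sub>R v) = k *\<^sub>R (A *v v)"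
  by (simp add: vec_eq_iff matrix_vector_mult_def sum_distrib_left vector_scaleR_component real_scaleR_def mult.left_commute)

lemma eig_exists:
  fixes A :: "real^'n^'n"
  assumes sA: "symm A" and S: "subspace S" and nz: "S \<noteq> {0}" and inv: "\<forall>x\<in>S. A *v x \<in> S"
  shows "\<exists>x\<in>S. norm x = 1 \<and> (\<exists>l. A *v x = l *\<^sub>R x)"
proof -
  obtain y where y: "y \<in> S" "y \<noteq> 0" using nz S subspace_0 by blast
  let ?K = "S \<inter> sphere 0 1"
  let ?f = "\<lambda>x. x \<bullet> (A *v x)"
  have cK: "compact ?K"
    by (simp add: S closed_subspace compact_Int_closed compact_sphere Int_commute[of S] )
  have neK: "?K \<noteq> {}"
  proof -
    have "y /\<^sub>R norm y \<in> ?K" using y S by (simp add: subspace_scale)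
    then show ?thesis by blast
  qed
  have cf: "continuous_on ?K ?f"
    by (intro continuous_intros matrix_vector_mult_linear_continuous_on[THEN continuous_on_subset]) auto
  obtain x0 where x0K: "x0 \<in> ?K" and mx: "\<forall>z\<in>?K. ?f z \<le> ?f x0"
    using continuous_attains_sup[OF cK neK cf] by blast
  define l where "l = ?f x0"
  have x0S: "x0 \<in> S" and nx0: "norm x0 = 1" using x0K by auto
  have x0x0: "x0 \<bullet> x0 = 1" using nx0 by (simp add: norm_eq_1)
  have Q: "z \<bullet> (A *v z) \<le> l * (z \<bullet> z)" if zS: "z \<in> S" for z
  proof (cases "z = 0")
    case True then show ?thesis by simp
  next
    case False
    have "z /\<^sub>R norm z \<in> ?K" using zS False S by (simp add: subspace_scale)
    then have le: "?f (z /\<^sub>R norm z) \<le> l" using mx l_def by blast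
    have eq: "?f (z /\<^sub>R norm z) = (z \<bullet> (A *v z)) / (z \<bullet> z)"
      by (simp add: mv_scaleR power2_norm_eq_inner[symmetric] power2_eq_square divide_simps)
    have "z \<bullet> z > 0" using False by simp
    then show ?thesis using le unfolding eq by (simp add: pos_divide_le_eq mult.commute)
  qed
  define r where "r = A *v x0 - l *\<^sub>R x0"
  have rS: "r \<in> S" unfolding r_def using inv x0S S by (simp add: subspace_diff subspace_scale)
  have x0r: "x0 \<bullet> r = 0" unfolding r_def using x0x0 by (simp add: inner_diff_right l_def)
  define a where "a = r \<bullet> r"
  define b where "b = r \<bullet> (A *v r)"
  have rA: "r \<bullet> (A *v x0) = a"
  proof -
    have "A *v x0 = r + l *\<^sub>R x0" unfolding r_def by simp
    then show ?thesis using x0r by (simp add: a_def inner_add_right inner_commute)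
  qed
  have x0Ar: "x0 \<bullet> (A *v r) = a" using symm_inner[OF sA, of x0 r] rA by (simp add: inner_commute)
  have key: "2 * t * a \<le> t^2 * (l * a - b)" for t
  proof -
    have zS: "x0 + t *\<^sub>R r \<in> S" using x0S rS S by (simp add: subspace_add subspace_scale)
    have e1: "(x0 + t *\<^sub>R r) \<bullet> (A *v (x0 + t *\<^sub>R r)) = l + 2 * t * a + t^2 * b"
      by (simp add: matrix_vector_right_distrib mv_scaleR
          inner_add_left inner_add_right l_def rA x0Ar b_def power2_eq_square algebra_simps)
    have e2: "(x0 + t *\<^sub>R r) \<bullet> (x0 + t *\<^sub>R r) = 1 + t^2 * a"
      by (simp add: inner_add_left inner_add_right x0x0 x0r inner_commute[of r x0] a_def power2_eq_square)
    show ?thesis using Q[OF zS] unfolding e1 e2 by (simp add: algebra_simps)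
  qed
  have a0: "a = 0"
  proof -
    define k where "k = \<bar>l * a - b\<bar> + 1"
    have kpos: "k > 0" unfolding k_def by simp
    have "2 * (a/k) * a \<le> (a/k)^2 * (l * a - b)" using key by blast
    then have "2 * a * a * k \<le> a^2 * (l*a - b)" using kpos
      by (simp add: divide_simps power2_eq_square mult_ac split: if_splits)
    also have "\<dots> \<le> a^2 * (k - 1)" unfolding k_def by (intro mult_left_mono) auto
    finally have "a^2 * (k + 1) \<le> 0" by (simp add: algebra_simps power2_eq_square)
    then have "a^2 \<le> 0" using kpos by (simp add: mult_le_0_iff)
    then show ?thesis by simp
  qed
  then have "r = 0" unfolding a_def by simp
  then have "A *v x0 = l *\<^sub>R x0" unfolding r_def by simp
  then show ?thesis using x0S nx0 by blast
qed


lemma eig_basis: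
  fixes A :: "real^'n^'n"
  assumes sA: "symm A"
  shows "subspace S \<Longrightarrow> (\<forall>x\<in>S. A *v x \<in> S) \<Longrightarrow>
    \<exists>B. B \<subseteq> S \<and> pairwise orthogonal B \<and> (\<forall>x\<in>B. norm x = 1 \<and> (\<exists>l. A *v x = l *\<^sub>R x)) \<and> span B = S"
proof (induction "dim S" arbitrary: S rule: less_induct)
  case less
  show ?case
  proof (cases "S = {0}")
    case True
    then show ?thesis by (intro exI[of _ "{}"]) auto
  next
    case False
    obtain x0 l where x0S: "x0 \<in> S" and nx0: "norm x0 = 1" and ev: "A *v x0 = l *\<^sub>R x0"
      using eig_exists[OF sA less.prems(1) False less.prems(2)] by blast
    have x0x0: "x0 \<bullet> x0 = 1" using nx0 by (simp add: norm_eq_1)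
    define S' where "S' = S \<inter> {y. x0 \<bullet> y = 0}"
    have sS': "subspace S'" unfolding S'_def
      by (intro subspace_inter less.prems(1) subspace_hyperplane)
    have iS': "\<forall>x\<in>S'. A *v x \<in> S'"
    proof
      fix x assume x: "x \<in> S'"
      have "x0 \<bullet> (A *v x) = (A *v x0) \<bullet> x" by (rule symm_inner[OF sA])
      also have "\<dots> = 0" using x by (simp add: ev S'_def)
      finally show "A *v x \<in> S'" using x less.prems(2) by (simp add: S'_def)
    qed
    have "x0 \<notin> S'" by (simp add: S'_def x0x0)
    then have "S' \<subset> S" using x0S unfolding S'_def by blast
    then have "dim S' < dim S"
    proof -
      show ?thesis using dim_psubset[of S' S] \<open>S' \<subset> S\<close> sS' less.prems(1) by (metis span_eq_iff)
    qed
    then obtain B' where B': "B' \<subseteq> S'" "pairwise orthogonal B'"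
      "\<forall>x\<in>B'. norm x = 1 \<and> (\<exists>l. A *v x = l *\<^sub>R x)" "span B' = S'"
      using less.hyps[OF _ sS' iS'] by blast
    show ?thesis
    proof (intro exI[of _ "insert x0 B'"] conjI)
      show "insert x0 B' \<subseteq> S" using x0S B'(1) S'_def by auto
      show "pairwise orthogonal (insert x0 B')"
        using B'(1,2) unfolding pairwise_insert S'_def
        by (auto simp: orthogonal_def inner_commute)
      show "\<forall>x\<in>insert x0 B'. norm x = 1 \<and> (\<exists>l. A *v x = l *\<^sub>R x)"
        using B'(3) nx0 ev by auto
      show "span (insert x0 B') = S"
      proof
        show "span (insert x0 B') \<subseteq> S"
          using x0S B'(1) S'_def less.prems(1) by (intro span_minimal) auto
        show "S \<subseteq> span (insert x0 B')"
        proof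
          fix z assume zS: "z \<in> S"
          have "z - (x0 \<bullet> z) *\<^sub>R x0 \<in> S'"
            using zS x0S less.prems(1) x0x0
            by (simp add: S'_def subspace_diff subspace_scale inner_diff_right)
          then show "z \<in> span (insert x0 B')"
            unfolding span_breakdown_eq B'(4) by blast
        qed
      qed
    qed
  qed
qed

definition diagm :: "('n \<Rightarrow> real) \<Rightarrow> real^'n^'n" where
  "diagm l = (\<chi> i j. if i = j then l i else 0)"

lemma spectral:
  fixes A :: "real^'n^'n"
  assumes sA: "symm A"
  shows "\<exists>Q l. orthogonal_matrix Q \<and> (\<forall>j. A *v column j Q = l j *\<^sub>R column j Q)"
proof -
  obtain B where B: "pairwise orthogonal B" "\<forall>x\<in>B. norm x = 1 \<and> (\<exists>l. A *v x = l *\<^sub>R x)"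
    "span B = UNIV"
    using eig_basis[OF sA, of UNIV] by auto
  have "0 \<notin> B" using B(2) by force
  then have iB: "independent B" using B(1) pairwise_orthogonal_independent by blast
  then have fB: "finite B" using finiteI_independent by blast
  have "card B = dim B" using dim_eq_card_independent[OF iB] by simp
  also have "\<dots> = dim (span B)" by simp
  also have "\<dots> = CARD('n)" using B(3) by (simp add: dim_UNIV)
  finally have cB: "card B = CARD('n)" .
  obtain f where f: "bij_betw f (UNIV::'n set) B"
    using finite_same_card_bij[OF finite_class.finite_UNIV fB] cB by (metis bij_betw_inv)
  have nf: "\<And>i. norm (f i) = 1" using bij_betwE[OF f] B(2) by blast
  have of: "\<And>i j. i \<noteq> j \<Longrightarrow> orthogonal (f i) (f j)"
    using B(1) f by (auto simp: pairwise_def bij_betw_def inj_on_def)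
  define Q where "Q = (\<chi> i j. f j $ i)"
  have cQ: "column j Q = f j" for j by (simp add: Q_def column_def vec_eq_iff)
  have "\<forall>j. \<exists>l. A *v f j = l *\<^sub>R f j" using bij_betwE[OF f] B(2) by blast
  then obtain l where "\<forall>j. A *v f j = l j *\<^sub>R f j" by metis
  moreover have "orthogonal_matrix Q"
    by (simp add: orthogonal_matrix_orthonormal_columns cQ nf of)
  ultimately show ?thesis using cQ by metis
qed

lemma mm_add_rdistrib: fixes A B C :: "real^'n^'n" shows "(A + B) ** C = A ** C + B ** C"
  by (simp add: vec_eq_iff matrix_matrix_mult_def sum.distrib distrib_right)

lemma mm_diff_rdistrib: fixes A B C :: "real^'n^'n" shows "(A - B) ** C = A ** C - B ** C"
  by (simp add: vec_eq_iff matrix_matrix_mult_def sum_subtractf left_diff_distrib)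

lemma mm_diff_ldistrib: fixes A B C :: "real^'n^'n" shows "C ** (A - B) = C ** A - C ** B"
  by (simp add: vec_eq_iff matrix_matrix_mult_def sum_subtractf right_diff_distrib)

lemma transpose_add: fixes A B :: "real^'n^'n" shows "transpose (A + B) = transpose A + transpose B"
  by (simp add: vec_eq_iff transpose_def)

lemma transpose_diff: fixes A B :: "real^'n^'n" shows "transpose (A - B) = transpose A - transpose B"
  by (simp add: vec_eq_iff transpose_def)

lemma inner_transpose: fixes L :: "real^'n^'n" shows "x \<bullet> (transpose L *v y) = (L *v x) \<bullet> y"
  by (metis dot_lmul_matrix vector_transpose_matrix)

lemma orth_det2: fixes Q :: "real^'n^'n" assumes "orthogonal_matrix Q" shows "(det Q)^2 = 1"
proof -
  have "det (transpose Q ** Q) = 1" using assms by (simp add: orthogonal_matrix)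
  then show ?thesis by (simp add: det_mul power2_eq_square)
qed

lemma det_congr: fixes L X :: "real^'n^'n" shows "det (transpose L ** X ** L) = det X * (det L)^2"
  by (simp add: det_mul power2_eq_square)

lemma orth_det: fixes Q X :: "real^'n^'n" assumes "orthogonal_matrix Q"
  shows "det (transpose Q ** X ** Q) = det X"
  using det_congr[of Q X] orth_det2[OF assms] by simp

lemma diagm_mult: "diagm a ** diagm b = diagm (\<lambda>i. a i * b i)"
proof -
  have "(\<Sum>k\<in>UNIV. (if i = k then a i else 0) * (if k = j then b k else 0))
        = (if i = j then a i * b i else 0)" for i j
  proof -
    have "(\<Sum>k\<in>UNIV. (if i = k then a i else 0) * (if k = j then b k else 0))
        = (\<Sum>k\<in>UNIV. if k = i then (if i = j then a i * b i else 0) else 0)"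
      by (rule sum.cong) auto
    also have "\<dots> = (if i = j then a i * b i else 0)" by simp
    finally show ?thesis .
  qed
  then show ?thesis by (simp add: vec_eq_iff matrix_matrix_mult_def diagm_def)
qed

lemma transpose_diagm: "transpose (diagm a) = diagm a"
  by (simp add: vec_eq_iff transpose_def diagm_def)

lemma diagm_1: "diagm (\<lambda>i. 1) = mat 1"
  by (simp add: vec_eq_iff diagm_def mat_def)

lemma det_diagm: "det (diagm a) = (\<Prod>i\<in>UNIV. a i)"
  by (subst det_diagonal) (auto simp: diagm_def)

lemma trace_diagm: "trace (diagm a) = (\<Sum>i\<in>UNIV. a i)"
  by (simp add: trace_def diagm_def)

lemma spectral2:
  fixes A :: "real^'n^'n"
  assumes sA: "symm A"
  shows "\<exists>Q l. orthogonal_matrix Q \<and> transpose Q ** A ** Q = diagm l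
      \<and> A = Q ** diagm l ** transpose Q \<and> (\<forall>j. A *v column j Q = l j *\<^sub>R column j Q)"
proof -
  obtain Q l where Q: "orthogonal_matrix Q" and ev: "\<forall>j. A *v column j Q = l j *\<^sub>R column j Q"
    using spectral[OF sA] by blast
  have AQ: "A ** Q = Q ** diagm l"
  proof -
    have "(A ** Q) $ i $ j = (Q ** diagm l) $ i $ j" for i j
    proof -
      have "(A ** Q) $ i $ j = (A *v column j Q) $ i"
        by (simp add: matrix_matrix_mult_def matrix_vector_mult_def column_def)
      also have "\<dots> = l j * Q $ i $ j" using ev by (simp add: column_def)
      also have "\<dots> = (Q ** diagm l) $ i $ j"
        by (simp add: matrix_matrix_mult_def diagm_def if_distrib cong: if_cong)
      finally show ?thesis .
    qed
    then show ?thesis by (simp add: vec_eq_iff)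
  qed
  have QtQ: "transpose Q ** Q = mat 1" and QQt: "Q ** transpose Q = mat 1"
    using Q by (simp_all add: orthogonal_matrix_def)
  have "transpose Q ** A ** Q = diagm l"
    by (metis AQ QtQ matrix_mul_assoc matrix_mul_lid)
  moreover have "A = Q ** diagm l ** transpose Q"
    by (metis AQ QQt matrix_mul_assoc matrix_mul_rid)
  ultimately show ?thesis using Q ev by blast
qed

definition psd :: "real^'n^'n \<Rightarrow> bool" where
  "psd A \<longleftrightarrow> symm A \<and> (\<forall>x. 0 \<le> x \<bullet> (A *v x))"

definition pd :: "real^'n^'n \<Rightarrow> bool" where
  "pd A \<longleftrightarrow> symm A \<and> (\<forall>x. x \<noteq> 0 \<longrightarrow> 0 < x \<bullet> (A *v x))"

lemma pd_eig_pos: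
  fixes A Q :: "real^'n^'n"
  assumes "pd A" "orthogonal_matrix Q" "A *v column j Q = l *\<^sub>R column j Q"
  shows "l > 0"
proof -
  have n1: "norm (column j Q) = 1" using assms(2) by (simp add: orthogonal_matrix_orthonormal_columns)
  then have "column j Q \<noteq> 0" by auto
  then have "0 < column j Q \<bullet> (A *v column j Q)" using assms(1) by (simp add: pd_def)
  also have "\<dots> = l * (column j Q \<bullet> column j Q)" using assms(3) by simp
  also have "\<dots> = l" using n1 by (simp add: norm_eq_1)
  finally show ?thesis .
qed

lemma pd_factor:
  fixes P :: "real^'n^'n"
  assumes "pd P"
  shows "\<exists>L. transpose L ** P ** L = mat 1 \<and> det P * (det L)^2 = 1
     \<and> P ** (L ** transpose L) = mat 1 \<and> (L ** transpose L) ** P = mat 1"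
proof -
  have sP: "symm P" using assms by (simp add: pd_def)
  obtain Q l where Q: "orthogonal_matrix Q" and QPQ: "transpose Q ** P ** Q = diagm l"
    and ev: "\<forall>j. P *v column j Q = l j *\<^sub>R column j Q"
    using spectral2[OF sP] by blast
  have lpos: "l j > 0" for j using pd_eig_pos[OF assms Q] ev by blast
  define D where "D = diagm (\<lambda>i. 1 / sqrt (l i))"
  define L where "L = Q ** D"
  have "transpose L ** P ** L = D ** (transpose Q ** P ** Q) ** D"
    by (simp add: L_def matrix_transpose_mul D_def transpose_diagm matrix_mul_assoc)
  also have "\<dots> = diagm (\<lambda>i. 1 / sqrt (l i) * l i * (1 / sqrt (l i)))"
    by (simp add: QPQ D_def diagm_mult)
  also have "\<dots> = mat 1"
  proof -
    have "1 / sqrt (l i) * l i * (1 / sqrt (l i)) = 1" for i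
      using lpos[of i] by (simp add: field_simps)
    then show ?thesis by (simp add: diagm_1)
  qed
  finally have LPL: "transpose L ** P ** L = mat 1" .
  have d1: "det P * (det L)^2 = 1" using det_congr[of L P] LPL by simp
  have "(transpose L ** P) ** L = mat 1" using LPL .
  then have "L ** (transpose L ** P) = mat 1" using matrix_left_right_inverse by blast
  then have XP: "(L ** transpose L) ** P = mat 1" by (simp add: matrix_mul_assoc)
  then have PX: "P ** (L ** transpose L) = mat 1" using matrix_left_right_inverse by blast
  show ?thesis using LPL d1 XP PX by blast
qed

lemma pd_det_pos: fixes P :: "real^'n^'n" assumes "pd P" shows "det P > 0"
proof -
  obtain L :: "real^'n^'n" where "det P * (det L)^2 = 1" using pd_factor[OF assms] by auto
  moreover have "(det L)^2 \<ge> 0" by simp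
  ultimately show ?thesis by (metis less_numeral_extra(1) linorder_not_le mult_nonpos_nonneg)
qed

lemma symm_congr: fixes L N :: "real^'n^'n" assumes "symm N" shows "symm (transpose L ** N ** L)"
  using assms by (simp add: symm_transpose matrix_transpose_mul matrix_mul_assoc)

lemma quad_congr: fixes L N :: "real^'n^'n"
  shows "x \<bullet> ((transpose L ** N ** L) *v x) = (L *v x) \<bullet> (N *v (L *v x))"
  unfolding matrix_vector_mul_assoc[symmetric] inner_transpose by (rule refl)

lemma logdet_I_le_trace:
  fixes T :: "real^'n^'n"
  assumes sT: "symm T" and pdT: "pd (mat 1 + T)"
  shows "ln (det (mat 1 + T)) \<le> trace T"
proof -
  obtain Q t where Q: "orthogonal_matrix Q" and QTQ: "transpose Q ** T ** Q = diagm t"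
    and TQ: "T = Q ** diagm t ** transpose Q" and ev: "\<forall>j. T *v column j Q = t j *\<^sub>R column j Q"
    using spectral2[OF sT] by blast
  have QtQ: "transpose Q ** Q = mat 1" using Q by (simp add: orthogonal_matrix_def)
  have pos: "1 + t j > 0" for j
  proof -
    have "(mat 1 + T) *v column j Q = (1 + t j) *\<^sub>R column j Q"
      using ev by (simp add: matrix_vector_mult_add_rdistrib scaleR_add_left)
    then show ?thesis using pd_eig_pos[OF pdT Q] by blast
  qed
  have "det (mat 1 + T) = det (transpose Q ** (mat 1 + T) ** Q)" using orth_det[OF Q] by simp
  also have "transpose Q ** (mat 1 + T) ** Q = mat 1 + diagm t"
    by (simp add: matrix_add_ldistrib mm_add_rdistrib QtQ QTQ)
  also have "mat 1 + diagm t = diagm (\<lambda>i. 1 + t i)"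
    by (simp add: vec_eq_iff diagm_def mat_def)
  finally have d: "det (mat 1 + T) = (\<Prod>i\<in>UNIV. 1 + t i)" by (simp add: det_diagm)
  have "trace T = trace ((Q ** diagm t) ** transpose Q)" using TQ by simp
  also have "\<dots> = trace (transpose Q ** (Q ** diagm t))" by (rule trace_mul_sym)
  also have "\<dots> = trace (diagm t)" by (simp add: matrix_mul_assoc QtQ)
  finally have tr: "trace T = (\<Sum>i\<in>UNIV. t i)" by (simp add: trace_diagm)
  have "ln (det (mat 1 + T)) = (\<Sum>i\<in>UNIV. ln (1 + t i))"
  proof -
    have nz: "1 + t i \<noteq> 0" for i using pos[of i] by linarith
    show ?thesis unfolding d by (rule ln_prod) (auto simp: nz)
  qed
  also have "\<dots> \<le> (\<Sum>i\<in>UNIV. t i)"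
    by (rule sum_mono) (use ln_le_minus_one[OF pos] in simp)
  finally show ?thesis using tr by simp
qed

lemma pd_congr:
  fixes L N :: "real^'n^'n"
  assumes "pd N" and inj: "\<And>x. L *v x = 0 \<Longrightarrow> x = 0"
  shows "pd (transpose L ** N ** L)"
  using assms unfolding pd_def by (auto simp: symm_congr quad_congr)

lemma logdet_tangent:
  fixes M :: "real^'n^'n"
  assumes "pd M"
  shows "\<exists>X. \<forall>N. pd N \<longrightarrow> ln (det N) \<le> ln (det M) + trace (X ** (N - M))"
proof -
  obtain L where LML: "transpose L ** M ** L = mat 1" and d1: "det M * (det L)^2 = 1"
    using pd_factor[OF assms] by blast
  have injL: "x = 0" if "L *v x = 0" for x
  proof -
    have "x = (transpose L ** M ** L) *v x" using LML by simp
    also have "\<dots> = 0" using that by (simp add: matrix_vector_mul_assoc[symmetric])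
    finally show ?thesis .
  qed
  have dL: "(det L)^2 > 0" using d1 by (cases "det L = 0") auto
  show ?thesis
  proof (intro exI allI impI)
    fix N :: "real^'n^'n" assume pN: "pd N"
    define T where "T = transpose L ** N ** L - mat 1"
    have sT: "symm T" using pN unfolding T_def pd_def
      by (simp add: symm_transpose transpose_diff matrix_transpose_mul matrix_mul_assoc transpose_mat)
    have eT: "mat 1 + T = transpose L ** N ** L" by (simp add: T_def)
    have pT: "pd (mat 1 + T)" unfolding eT by (rule pd_congr[OF pN injL])
    have "ln (det (mat 1 + T)) \<le> trace T" by (rule logdet_I_le_trace[OF sT pT])
    moreover have "ln (det (mat 1 + T)) = ln (det N) - ln (det M)"
    proof -
      have "det (mat 1 + T) = det N * (det L)^2" unfolding eT by (rule det_congr)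
      moreover have "det N > 0" using pd_det_pos[OF pN] .
      moreover have "det M > 0" using pd_det_pos[OF assms] .
      moreover have "ln (det M) + ln ((det L)^2) = 0" using ln_mult[of "det M" "(det L)^2"] d1 dL \<open>det M > 0\<close> by simp
      ultimately show ?thesis using dL by (simp add: ln_mult)
    qed
    moreover have "trace T = trace ((L ** transpose L) ** (N - M))"
    proof -
      have "trace T = trace (transpose L ** N ** L) - trace (transpose L ** M ** L)"
        by (simp add: T_def LML trace_sub)
      also have "\<dots> = trace (transpose L ** ((N - M) ** L))"
        by (simp add: mm_diff_rdistrib mm_diff_ldistrib trace_sub matrix_mul_assoc)
      also have "\<dots> = trace (((N - M) ** L) ** transpose L)" by (rule trace_mul_sym)
      also have "\<dots> = trace ((N - M) ** (L ** transpose L))" by (simp add: matrix_mul_assoc)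
      also have "\<dots> = trace ((L ** transpose L) ** (N - M))" by (rule trace_mul_sym)
      finally show ?thesis .
    qed
    ultimately show "ln (det N) \<le> ln (det M) + trace ((L ** transpose L) ** (N - M))" by linarith
  qed
qed

definition outer :: "real^'n \<Rightarrow> real^'n^'n" where
  "outer v = (\<chi> i j. v$i * v$j)"

lemma outer_mult: "outer w *v z = (w \<bullet> z) *\<^sub>R w"
  by (simp add: vec_eq_iff outer_def matrix_vector_mult_def inner_vec_def sum_distrib_left mult_ac)

lemma outer_congr: fixes L :: "real^'n^'n"
  shows "transpose L ** outer v ** L = outer (transpose L *v v)"
proof -
  have "(transpose L ** outer v ** L) $ i $ j = (transpose L *v v) $ i * (transpose L *v v) $ j" for i j
  proof -
    have "(transpose L ** outer v ** L) $ i $ j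
        = (\<Sum>k\<in>UNIV. \<Sum>m\<in>UNIV. (L$m$i * v$m) * (v$k * L$k$j))"
      by (simp add: matrix_matrix_mult_def transpose_def outer_def sum_distrib_left sum_distrib_right mult_ac)
    also have "\<dots> = (\<Sum>m\<in>UNIV. L$m$i * v$m) * (\<Sum>k\<in>UNIV. v$k * L$k$j)"
      by (subst sum_product) (rule sum.swap)
    also have "\<dots> = (transpose L *v v) $ i * (transpose L *v v) $ j"
      by (simp add: matrix_vector_mult_def transpose_def mult_ac)
    finally show ?thesis .
  qed
  then show ?thesis by (simp add: vec_eq_iff outer_def)
qed

lemma det_I_outer: fixes w :: "real^'n" shows "det (mat 1 + outer w) = 1 + w \<bullet> w"
proof (cases "w = 0")
  case True
  then have "outer w = 0" by (simp add: outer_def vec_eq_iff)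
  then show ?thesis using True by simp
next
  case False
  define a where "a = w /\<^sub>R norm w"
  have na: "norm a = 1" using False by (simp add: a_def)
  obtain k :: 'n where True by simp
  obtain A where A: "orthogonal_matrix A" and Ak: "A *v axis k 1 = a"
    using orthogonal_matrix_exists_basis[OF na] by blast
  have AtA: "transpose A ** A = mat 1" using A by (simp add: orthogonal_matrix_def)
  have wa: "w = norm w *\<^sub>R a" using False by (simp add: a_def)
  have Atw: "transpose A *v w = norm w *\<^sub>R axis k 1"
    by (subst wa) (simp add: mv_scaleR flip: Ak add: matrix_vector_mul_assoc AtA)
  have "det (mat 1 + outer w) = det (transpose A ** (mat 1 + outer w) ** A)"
    using orth_det[OF A] by simp
  also have "transpose A ** (mat 1 + outer w) ** A = mat 1 + outer (norm w *\<^sub>R axis k 1)"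
    by (simp only: matrix_add_ldistrib mm_add_rdistrib matrix_mul_rid AtA outer_congr Atw)
  also have "\<dots> = diagm (\<lambda>i. if i = k then 1 + (norm w)^2 else 1)"
    by (simp add: vec_eq_iff diagm_def mat_def outer_def axis_def power2_eq_square)
  also have "det \<dots> = 1 + (norm w)^2"
    by (simp add: det_diagm prod.If_cases)
  finally show ?thesis by (simp add: power2_norm_eq_inner)
qed

lemma rank_one:
  fixes P :: "real^'n^'n"
  assumes "pd P"
  shows "\<exists>X. P ** X = mat 1 \<and> X ** P = mat 1 \<and> symm X \<and> (\<forall>v. 0 \<le> v \<bullet> (X *v v))
    \<and> (\<forall>v. det (P + outer v) = det P * (1 + v \<bullet> (X *v v)))"
proof -
  obtain L where LPL: "transpose L ** P ** L = mat 1" and d1: "det P * (det L)^2 = 1"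
    and PX: "P ** (L ** transpose L) = mat 1" and XP: "(L ** transpose L) ** P = mat 1"
    using pd_factor[OF assms] by blast
  have quad: "v \<bullet> ((L ** transpose L) *v v) = (transpose L *v v) \<bullet> (transpose L *v v)" for v
  proof -
    have "v \<bullet> ((L ** transpose L) *v v) = v \<bullet> (transpose (transpose L) *v (transpose L *v v))"
      by (simp only: transpose_transpose matrix_vector_mul_assoc)
    also have "\<dots> = (transpose L *v v) \<bullet> (transpose L *v v)" by (rule inner_transpose)
    finally show ?thesis .
  qed
  have sX: "symm (L ** transpose L)" by (simp add: symm_transpose matrix_transpose_mul)
  have det1: "det (P + outer v) = det P * (1 + v \<bullet> ((L ** transpose L) *v v))" for v
  proof -
    have "det (P + outer v) * (det L)^2 = det (transpose L ** (P + outer v) ** L)"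
      by (simp add: det_congr)
    also have "transpose L ** (P + outer v) ** L = mat 1 + outer (transpose L *v v)"
      by (simp add: matrix_add_ldistrib mm_add_rdistrib LPL outer_congr)
    also have "det \<dots> = 1 + v \<bullet> ((L ** transpose L) *v v)" by (simp add: det_I_outer quad)
    finally have e: "det (P + outer v) * (det L)^2 = 1 + v \<bullet> ((L ** transpose L) *v v)" .
    have "det (P + outer v) = det (P + outer v) * (det P * (det L)^2)" using d1 by simp
    also have "\<dots> = det P * (det (P + outer v) * (det L)^2)" by (simp add: mult_ac)
    finally show ?thesis using e by simp
  qed
  show ?thesis using PX XP sX det1 quad by (intro exI[of _ "L ** transpose L"]) auto
qed

lemma variational:
  fixes P X :: "real^'n^'n"
  assumes sP: "symm P" and psP: "\<forall>x. 0 \<le> x \<bullet> (P *v x)" and PX: "P ** X = mat 1"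
    and sX: "symm X"
  shows "2 * (v \<bullet> y) - y \<bullet> (P *v y) \<le> v \<bullet> (X *v v)"
proof -
  have PXv: "P *v (X *v v) = v" using PX by (simp add: matrix_vector_mul_assoc)
  have "0 \<le> (y - X *v v) \<bullet> (P *v (y - X *v v))" using psP by blast
  also have "\<dots> = y \<bullet> (P *v y) - 2 * (v \<bullet> y) + v \<bullet> (X *v v)"
  proof -
    have "(X *v v) \<bullet> (P *v y) = v \<bullet> y" using symm_inner[OF sP, of "X *v v" y] PXv by simp
    moreover have "(X *v v) \<bullet> v = v \<bullet> (X *v v)" by (simp add: inner_commute)
    ultimately show ?thesis
      by (simp add: matrix_vector_mult_diff_distrib PXv inner_diff_left inner_diff_right inner_commute)
  qed
  finally show ?thesis by simp
qed

lemma inv_mono: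
  fixes P1 P2 X1 X2 :: "real^'n^'n"
  assumes sP1: "symm P1" and psP1: "\<forall>x. 0 \<le> x \<bullet> (P1 *v x)" and PX1: "P1 ** X1 = mat 1"
    and sP2: "symm P2" and psP2: "\<forall>x. 0 \<le> x \<bullet> (P2 *v x)" and PX2: "P2 ** X2 = mat 1"
    and sX2: "symm X2"
    and le: "\<forall>x. x \<bullet> (P2 *v x) \<le> x \<bullet> (P1 *v x)"
  shows "v \<bullet> (X1 *v v) \<le> v \<bullet> (X2 *v v)"
proof -
  define z where "z = X1 *v v"
  have P1z: "P1 *v z = v" using PX1 by (simp add: z_def matrix_vector_mul_assoc)
  have e1: "z \<bullet> (P1 *v z) = v \<bullet> z" using P1z by (simp add: inner_commute)
  have e2: "v \<bullet> (X1 *v v) = v \<bullet> z" by (simp add: z_def)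
  have "v \<bullet> (X1 *v v) = 2 * (v \<bullet> z) - z \<bullet> (P1 *v z)"
    using e1 e2 by simp
  also have "\<dots> \<le> 2 * (v \<bullet> z) - z \<bullet> (P2 *v z)" using le by simp
  also have "\<dots> \<le> v \<bullet> (X2 *v v)" by (rule variational[OF sP2 psP2 PX2 sX2])
  finally show ?thesis .
qed

lemma gram_Nil: "gram [] = 0"
  by (simp add: gram_def vec_eq_iff)

lemma gram_Cons: "gram (w # W) = outer w + gram W"
  by (simp add: gram_def outer_def vec_eq_iff)

lemma gram_append: "gram (xs @ ys) = gram xs + gram ys"
  by (induction xs) (simp_all add: gram_Nil gram_Cons add.assoc)

lemma gram_concat: "gram (concat Vs) = (\<Sum>c<length Vs. gram (Vs!c))"
  by (induction Vs) (simp_all add: gram_Nil gram_append sum.lessThan_Suc_shift del: sum.lessThan_Suc)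

lemma outer_scale: "outer (r *\<^sub>R w) = (r * r) *\<^sub>R outer w"
  by (simp add: outer_def vec_eq_iff mult_ac)

lemma gram_scale: "gram (map (scaleR r) W) = (r * r) *\<^sub>R gram W"
  by (induction W) (simp_all add: gram_Nil gram_Cons outer_scale scaleR_add_right)

lemma symm_add: "symm A \<Longrightarrow> symm B \<Longrightarrow> symm (A + B)"
  by (simp add: symm_def)

lemma symm_scaleR: "symm A \<Longrightarrow> symm (c *\<^sub>R A)"
  by (simp add: symm_def)

lemma symm_mat1: "symm (mat 1)"
  by (simp add: symm_def mat_def)

lemma symm_outer: "symm (outer w)"
  by (simp add: symm_def outer_def mult.commute)

lemma symm_gram: "symm (gram W)"
  by (simp add: symm_def gram_def mult.commute)

lemma quad_outer: "0 \<le> x \<bullet> (outer w *v x)"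
  by (simp add: outer_mult inner_commute)

lemma quad_gram: "0 \<le> x \<bullet> (gram W *v x)"
  by (induction W) (simp_all add: gram_Nil gram_Cons matrix_vector_mult_add_rdistrib inner_add_right quad_outer)

lemma gram_zero: "(\<forall>a\<in>set W. a \<bullet> z = 0) \<Longrightarrow> gram W *v z = 0"
  by (induction W) (simp_all add: gram_Nil gram_Cons matrix_vector_mult_add_rdistrib outer_mult)

lemma gram_orth: "(\<forall>w\<in>set W. a \<bullet> w = 0) \<Longrightarrow> a \<bullet> (gram W *v z) = 0"
  by (induction W) (simp_all add: gram_Nil gram_Cons matrix_vector_mult_add_rdistrib outer_mult inner_add_right)

lemma quad_scale: fixes A :: "real^'n^'n" shows "x \<bullet> ((k *\<^sub>R A) *v x) = k * (x \<bullet> (A *v x))"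
  by (simp add: scaleR_matrix_vector_assoc[symmetric])

lemma pd_I_plus:
  assumes "symm A" "\<forall>x. 0 \<le> x \<bullet> (A *v x)"
  shows "pd (mat 1 + A)"
  unfolding pd_def
proof (intro conjI allI impI)
  show "symm (mat 1 + A)" using assms by (simp add: symm_add symm_mat1)
  fix x :: "real^'a" assume "x \<noteq> 0"
  then have "0 < x \<bullet> x" by simp
  also have "\<dots> \<le> x \<bullet> x + x \<bullet> (A *v x)" using assms(2) by simp
  finally show "0 < x \<bullet> ((mat 1 + A) *v x)"
    by (simp add: matrix_vector_mult_add_rdistrib inner_add_right)
qed

lemma pd_gram: "pd (mat 1 + gram W)"
  by (rule pd_I_plus) (simp_all add: symm_gram quad_gram)

lemma pd_scale_gram:
  assumes "(0::real) \<le> k"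
  shows "pd (mat 1 + k *\<^sub>R gram W)"
proof (rule pd_I_plus)
  show "symm (k *\<^sub>R gram W)" by (rule symm_scaleR[OF symm_gram])
  show "\<forall>x. 0 \<le> x \<bullet> ((k *\<^sub>R gram W) *v x)"
    using assms by (simp only: quad_scale) (simp add: quad_gram)
qed

lemma pd_gram2: "pd (mat 1 + gram Wa + gram Wb)"
  unfolding add.assoc
  by (rule pd_I_plus) (simp_all add: symm_gram symm_add quad_gram matrix_vector_mult_add_rdistrib inner_add_right add_nonneg_nonneg)

lemma pd_psd: "pd A \<Longrightarrow> 0 \<le> x \<bullet> (A *v x)"
  unfolding pd_def by (cases "x = 0") (auto intro: less_imp_le)

lemma sub2:
  fixes Wa Wb :: "(real^'n) list"
  shows "det (mat 1 + gram Wa + gram Wb) \<le> det (mat 1 + gram Wa) * det (mat 1 + gram Wb)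
    \<and> ((\<forall>a\<in>set Wa. \<forall>b\<in>set Wb. a \<bullet> b = 0) \<longrightarrow>
        det (mat 1 + gram Wa + gram Wb) = det (mat 1 + gram Wa) * det (mat 1 + gram Wb))"
proof (induction Wb)
  case Nil
  then show ?case by (simp add: gram_Nil)
next
  case (Cons v Wb)
  define P1 where "P1 = mat 1 + gram Wa + gram Wb"
  define P2 where "P2 = mat 1 + gram Wb"
  have e1: "mat 1 + gram Wa + gram (v # Wb) = P1 + outer v" by (simp add: P1_def gram_Cons add_ac)
  have e2: "mat 1 + gram (v # Wb) = P2 + outer v" by (simp add: P2_def gram_Cons add_ac)
  have pP1: "pd P1" unfolding P1_def by (rule pd_gram2)
  have pP2: "pd P2" unfolding P2_def by (rule pd_gram)
  have pA: "det (mat 1 + gram Wa) > 0" using pd_det_pos[OF pd_gram] .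
  have d1: "det P1 > 0" using pd_det_pos[OF pP1] .
  have d2: "det P2 > 0" using pd_det_pos[OF pP2] .
  obtain X1 where PX1: "P1 ** X1 = mat 1" and XP1: "X1 ** P1 = mat 1" and sX1: "symm X1"
    and q1: "\<forall>v. 0 \<le> v \<bullet> (X1 *v v)" and r1: "\<forall>v. det (P1 + outer v) = det P1 * (1 + v \<bullet> (X1 *v v))"
    using rank_one[OF pP1] by blast
  obtain X2 where PX2: "P2 ** X2 = mat 1" and XP2: "X2 ** P2 = mat 1" and sX2: "symm X2"
    and q2: "\<forall>v. 0 \<le> v \<bullet> (X2 *v v)" and r2: "\<forall>v. det (P2 + outer v) = det P2 * (1 + v \<bullet> (X2 *v v))"
    using rank_one[OF pP2] by blast
  have P12: "P1 = P2 + gram Wa" by (simp add: P1_def P2_def add_ac)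
  have le: "\<forall>x. x \<bullet> (P2 *v x) \<le> x \<bullet> (P1 *v x)"
    by (simp add: P12 matrix_vector_mult_add_rdistrib inner_add_right quad_gram)
  have qle: "v \<bullet> (X1 *v v) \<le> v \<bullet> (X2 *v v)"
    using inv_mono[OF _ _ PX1 _ _ PX2 sX2 le] pP1 pP2 by (simp add: pd_def pd_psd)
  have IH1: "det P1 \<le> det (mat 1 + gram Wa) * det P2" using Cons.IH by (simp add: P1_def P2_def)
  have "det (mat 1 + gram Wa + gram (v # Wb)) = det P1 * (1 + v \<bullet> (X1 *v v))" using e1 r1 by simp
  also have "\<dots> \<le> (det (mat 1 + gram Wa) * det P2) * (1 + v \<bullet> (X1 *v v))"
    using IH1 q1 by (intro mult_right_mono) (auto simp: add_nonneg_nonneg)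
  also have "\<dots> \<le> (det (mat 1 + gram Wa) * det P2) * (1 + v \<bullet> (X2 *v v))"
    using qle pA d2 by (intro mult_left_mono) auto
  also have "\<dots> = det (mat 1 + gram Wa) * det (mat 1 + gram (v # Wb))" using e2 r2 by simp
  finally have ineq: "det (mat 1 + gram Wa + gram (v # Wb)) \<le> det (mat 1 + gram Wa) * det (mat 1 + gram (v # Wb))" .
  have eq: "det (mat 1 + gram Wa + gram (v # Wb)) = det (mat 1 + gram Wa) * det (mat 1 + gram (v # Wb))"
    if orth: "\<forall>a\<in>set Wa. \<forall>b\<in>set (v # Wb). a \<bullet> b = 0"
  proof -
    have IH2: "det P1 = det (mat 1 + gram Wa) * det P2" using Cons.IH orth by (simp add: P1_def P2_def)
    define z where "z = X2 *v v"
    have P2z: "P2 *v z = v" using PX2 by (simp add: z_def matrix_vector_mul_assoc)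
    have zv: "z = v - gram Wb *v z" using P2z by (simp add: P2_def matrix_vector_mult_add_rdistrib algebra_simps)
    have az: "\<forall>a\<in>set Wa. a \<bullet> z = 0"
    proof
      fix a assume a: "a \<in> set Wa"
      have "a \<bullet> z = a \<bullet> v - a \<bullet> (gram Wb *v z)" by (subst zv) (simp add: inner_diff_right)
      also have "\<dots> = 0" using orth a by (simp add: gram_orth)
      finally show "a \<bullet> z = 0" .
    qed
    have "P1 *v z = v" using P2z gram_zero[OF az] by (simp add: P12 matrix_vector_mult_add_rdistrib)
    then have "X1 *v v = z" using XP1 by (metis matrix_vector_mul_assoc matrix_vector_mul_lid)
    then have qeq: "v \<bullet> (X1 *v v) = v \<bullet> (X2 *v v)" by (simp add: z_def)
    have "det (mat 1 + gram Wa + gram (v # Wb)) = det P1 * (1 + v \<bullet> (X1 *v v))" using e1 r1 by simp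
    also have "\<dots> = det (mat 1 + gram Wa) * (det P2 * (1 + v \<bullet> (X2 *v v)))" using IH2 qeq by simp
    also have "\<dots> = det (mat 1 + gram Wa) * det (mat 1 + gram (v # Wb))" using e2 r2 by simp
    finally show ?thesis .
  qed
  show ?case using ineq eq by blast
qed

definition orthC :: "(real^'n) list list \<Rightarrow> bool" where
  "orthC Vs \<longleftrightarrow> (\<forall>c1 c2. c1 < c2 \<and> c2 < length Vs \<longrightarrow> (\<forall>x\<in>set (Vs!c1). \<forall>y\<in>set (Vs!c2). x \<bullet> y = 0))"

lemma subC:
  fixes Vs :: "(real^'n) list list"
  shows "ln (det (mat 1 + gram (concat Vs))) \<le> (\<Sum>c<length Vs. ln (det (mat 1 + gram (Vs!c))))
    \<and> (orthC Vs \<longrightarrow> ln (det (mat 1 + gram (concat Vs))) = (\<Sum>c<length Vs. ln (det (mat 1 + gram (Vs!c)))))"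
proof (induction Vs)
  case Nil
  then show ?case by (simp add: gram_Nil)
next
  case (Cons V Vs)
  have e: "mat 1 + gram (concat (V # Vs)) = mat 1 + gram (concat Vs) + gram V"
    by (simp add: gram_append add_ac)
  have pa: "det (mat 1 + gram (concat Vs)) > 0" using pd_det_pos[OF pd_gram] .
  have pb: "det (mat 1 + gram V) > 0" using pd_det_pos[OF pd_gram] .
  have pc: "det (mat 1 + gram (concat Vs) + gram V) > 0" using pd_det_pos[OF pd_gram2] .
  have sumeq: "(\<Sum>c<length (V # Vs). ln (det (mat 1 + gram ((V # Vs)!c))))
      = ln (det (mat 1 + gram V)) + (\<Sum>c<length Vs. ln (det (mat 1 + gram (Vs!c))))"
    by (simp only: length_Cons sum.lessThan_Suc_shift nth_Cons_0 nth_Cons_Suc)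
  have lnprod: "ln (det (mat 1 + gram (concat Vs)) * det (mat 1 + gram V))
      = ln (det (mat 1 + gram (concat Vs))) + ln (det (mat 1 + gram V))"
    using pa pb by (simp add: ln_mult)
  have S2: "det (mat 1 + gram (concat Vs) + gram V) \<le> det (mat 1 + gram (concat Vs)) * det (mat 1 + gram V)"
    using sub2[of "concat Vs" V] by blast
  have ineq: "ln (det (mat 1 + gram (concat (V # Vs)))) \<le> (\<Sum>c<length (V # Vs). ln (det (mat 1 + gram ((V # Vs)!c))))"
  proof -
    have "ln (det (mat 1 + gram (concat (V # Vs)))) \<le> ln (det (mat 1 + gram (concat Vs)) * det (mat 1 + gram V))"
      unfolding e using S2 pc by simp
    then show ?thesis unfolding sumeq lnprod using Cons.IH by linarith
  qed
  have eq: "ln (det (mat 1 + gram (concat (V # Vs)))) = (\<Sum>c<length (V # Vs). ln (det (mat 1 + gram ((V # Vs)!c))))"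
    if o: "orthC (V # Vs)"
  proof -
    have oVs: "orthC Vs" using o unfolding orthC_def
      by (metis Suc_less_eq length_Cons nth_Cons_Suc)
    have oab: "\<forall>a\<in>set (concat Vs). \<forall>b\<in>set V. a \<bullet> b = 0"
    proof (intro ballI)
      fix a b assume a: "a \<in> set (concat Vs)" and b: "b \<in> set V"
      obtain W where W: "W \<in> set Vs" "a \<in> set W" using a by auto
      obtain c where c0: "c < length Vs" "Vs!c = W" using W(1) by (auto simp: in_set_conv_nth)
      have c: "c < length Vs" "a \<in> set (Vs!c)" using c0 W(2) by auto
      have "b \<bullet> a = 0" using o b c unfolding orthC_def
        by (metis length_Cons not_less_eq nth_Cons_0 nth_Cons_Suc zero_less_Suc Suc_less_eq)
      then show "a \<bullet> b = 0" by (simp add: inner_commute)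
    qed
    have S2e: "det (mat 1 + gram (concat Vs) + gram V) = det (mat 1 + gram (concat Vs)) * det (mat 1 + gram V)"
      using sub2[of "concat Vs" V] oab by blast
    show ?thesis unfolding e S2e lnprod sumeq using Cons.IH oVs by linarith
  qed
  show ?case using ineq eq by blast
qed

lemma trace_scaleR: fixes A :: "real^'n^'n" shows "trace (k *\<^sub>R A) = k * trace A"
  by (simp add: trace_def sum_distrib_left)

lemma mm_scaleR_right: fixes X A :: "real^'n^'n" shows "X ** (k *\<^sub>R A) = k *\<^sub>R (X ** A)"
  by (simp add: vec_eq_iff matrix_matrix_mult_def sum_distrib_left mult_ac)

lemma trace_zero: "trace (0 :: real^'n^'n) = 0"
  by (simp add: trace_def)

lemma trace_lin:
  fixes X :: "real^'n^'n"
  assumes "finite S"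
  shows "trace (X ** (\<Sum>c\<in>S. w c *\<^sub>R A c)) = (\<Sum>c\<in>S. w c * trace (X ** A c))"
  using assms
  by (induction S rule: finite_induct)
     (simp_all add: matrix_add_ldistrib trace_add mm_scaleR_right trace_scaleR trace_zero del: matrix_scalar_ac)


theorem lemma3:
  fixes Zs :: "(real^'d) list list" and eps :: real
  assumes eps: "eps > 0"
    and C: "length Zs \<ge> 1"
    and nc: "\<forall>c<length Zs. length (Zs!c) \<ge> 1"
  shows "TrR Zs eps \<ge> 0
    \<and> ((\<forall>c<length Zs. (1 / real (length (concat Zs))) *\<^sub>R gram (concat Zs)
                       = (1 / real (length (Zs!c))) *\<^sub>R gram (Zs!c))
        \<longrightarrow> TrR Zs eps = 0)
    \<and> TrR Zs eps \<le> 1/2 * (\<Sum>c<length Zs.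
          ln (det (mat 1 + (1 / (real (length (concat Zs)) * eps)) *\<^sub>R gram (Zs!c)))
          - real (length (Zs!c)) / real (length (concat Zs))
            * ln (det (mat 1 + (1 / (real (length (Zs!c)) * eps)) *\<^sub>R gram (Zs!c))))
    \<and> ((\<forall>c1 c2 k l. c1 < c2 \<and> c2 < length Zs \<and> k < length (Zs!c1) \<and> l < length (Zs!c2)
            \<longrightarrow> (Zs!c1)!k \<bullet> (Zs!c2)!l = 0)
        \<longrightarrow> TrR Zs eps = 1/2 * (\<Sum>c<length Zs.
          ln (det (mat 1 + (1 / (real (length (concat Zs)) * eps)) *\<^sub>R gram (Zs!c)))
          - real (length (Zs!c)) / real (length (concat Zs))
            * ln (det (mat 1 + (1 / (real (length (Zs!c)) * eps)) *\<^sub>R gram (Zs!c)))))"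
proof -
  define n where "n = real (length (concat Zs))"
  define C where "C = length Zs"
  define w where "w c = real (length (Zs!c)) / n" for c
  define M0 where "M0 = mat 1 + (1 / (n * eps)) *\<^sub>R gram (concat Zs)"
  define Mc where "Mc c = mat 1 + (1 / (real (length (Zs!c)) * eps)) *\<^sub>R gram (Zs!c)" for c
  have nsum: "n = (\<Sum>c<C. real (length (Zs!c)))"
  proof -
    have "length (concat Zs) = (\<Sum>c<C. length (Zs!c))"
      by (simp add: length_concat sum_list_sum_nth atLeast0LessThan C_def)
    then show ?thesis by (simp add: n_def)
  qed
  have n1: "n \<ge> 1"
  proof -
    have "real (length (Zs!0)) \<le> (\<Sum>c<C. real (length (Zs!c)))"
      using C by (intro member_le_sum) (auto simp: C_def)
    moreover have "real (length (Zs!0)) \<ge> 1"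
    proof -
      have "0 < length Zs" using C by linarith
      then have "length (Zs!0) \<ge> 1" using nc by blast
      then show ?thesis by simp
    qed
    ultimately show ?thesis using nsum by linarith
  qed
  have wsum: "(\<Sum>c<C. w c) = 1"
    using n1 by (simp add: w_def nsum[symmetric] flip: sum_divide_distrib)
  have w0: "w c \<ge> 0" for c using n1 by (simp add: w_def)
  have TrR_eq: "TrR Zs eps = 1/2 * ln (det M0) - (\<Sum>c<C. w c * (1/2 * ln (det (Mc c))))"
    by (simp add: TrR_def coding_rate_def M0_def Mc_def w_def n_def C_def)
  have part1: "TrR Zs eps \<ge> 0"
  proof -
    have "0 \<le> n * eps" using n1 eps by simp
    then have pM0: "pd M0" unfolding M0_def by (intro pd_scale_gram) simp
    have pMc: "pd (Mc c)" for c
    proof -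
      have "0 \<le> real (length (Zs!c)) * eps" using eps by simp
      then show ?thesis unfolding Mc_def by (intro pd_scale_gram) simp
    qed
    obtain X where X: "\<forall>N. pd N \<longrightarrow> ln (det N) \<le> ln (det M0) + trace (X ** (N - M0))"
      using logdet_tangent[OF pM0] by blast
    have zero: "(\<Sum>c<C. w c *\<^sub>R (Mc c - M0)) = 0"
    proof -
      have "w c *\<^sub>R (Mc c - M0) = w c *\<^sub>R mat 1 + (1 / (n * eps)) *\<^sub>R gram (Zs!c) - w c *\<^sub>R M0"
        if "c < C" for c
      proof -
        have "real (length (Zs!c)) \<ge> 1" using nc that by (simp add: C_def)
        then have pos: "real (length (Zs!c)) > 0" by linarith
        then have "w c * (1 / (real (length (Zs!c)) * eps)) = 1 / (n * eps)"
          using eps n1 by (simp add: w_def field_simps)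
        then show ?thesis by (simp add: Mc_def scaleR_diff_right scaleR_add_right)
      qed
      then have "(\<Sum>c<C. w c *\<^sub>R (Mc c - M0))
          = (\<Sum>c<C. w c *\<^sub>R mat 1 + (1 / (n * eps)) *\<^sub>R gram (Zs!c) - w c *\<^sub>R M0)"
        by (intro sum.cong) auto
      also have "\<dots> = (\<Sum>c<C. w c) *\<^sub>R mat 1 + (1 / (n * eps)) *\<^sub>R (\<Sum>c<C. gram (Zs!c)) - (\<Sum>c<C. w c) *\<^sub>R M0"
        by (simp add: sum.distrib sum_subtractf scaleR_sum_left scaleR_sum_right)
      also have "\<dots> = 0"
        using wsum by (simp add: M0_def gram_concat C_def)
      finally show ?thesis .
    qed
    have "(\<Sum>c<C. w c * ln (det (Mc c))) \<le> (\<Sum>c<C. w c * (ln (det M0) + trace (X ** (Mc c - M0))))"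
      using X pMc w0 by (intro sum_mono mult_left_mono) auto
    also have "\<dots> = (\<Sum>c<C. w c) * ln (det M0) + (\<Sum>c<C. w c * trace (X ** (Mc c - M0)))"
      by (simp add: distrib_left sum.distrib sum_distrib_right)
    also have "(\<Sum>c<C. w c * trace (X ** (Mc c - M0))) = trace (X ** (\<Sum>c<C. w c *\<^sub>R (Mc c - M0)))"
      by (simp add: trace_lin)
    also have "\<dots> = 0" by (simp add: zero trace_zero)
    finally have "(\<Sum>c<C. w c * ln (det (Mc c))) \<le> ln (det M0)" by (simp add: wsum)
    moreover have e: "(\<Sum>c<C. w c * (1/2 * ln (det (Mc c)))) = (1/2) * (\<Sum>c<C. w c * ln (det (Mc c)))"
      unfolding sum_distrib_left by (rule sum.cong) auto
    ultimately show ?thesis unfolding TrR_eq e by linarith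
  qed
  have part2: "TrR Zs eps = 0"
    if h: "\<forall>c<length Zs. (1 / real (length (concat Zs))) *\<^sub>R gram (concat Zs)
                       = (1 / real (length (Zs!c))) *\<^sub>R gram (Zs!c)"
  proof -
    have "Mc c = M0" if c: "c < C" for c
    proof -
      have "(1 / (real (length (Zs!c)) * eps)) *\<^sub>R gram (Zs!c) = (1/eps) *\<^sub>R ((1 / real (length (Zs!c))) *\<^sub>R gram (Zs!c))"
        by simp
      also have "\<dots> = (1/eps) *\<^sub>R ((1 / n) *\<^sub>R gram (concat Zs))" using h c by (simp add: C_def n_def)
      also have "\<dots> = (1 / (n * eps)) *\<^sub>R gram (concat Zs)" by simp
      finally show ?thesis by (simp add: Mc_def M0_def)
    qed
    then have "(\<Sum>c<C. w c * (1/2 * ln (det (Mc c)))) = (\<Sum>c<C. w c) * (1/2 * ln (det M0))"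
      by (simp add: sum_distrib_right)
    then show ?thesis unfolding TrR_eq by (simp add: wsum)
  qed
  define r where "r = 1 / sqrt (n * eps)"
  have rr: "r * r = 1 / (n * eps)" using n1 eps by (simp add: r_def)
  define Vs where "Vs = map (map (scaleR r)) Zs"
  have lVs: "length Vs = C" by (simp add: Vs_def C_def)
  have gVc: "gram (Vs!c) = (1 / (n * eps)) *\<^sub>R gram (Zs!c)" if "c < C" for c
    using that by (simp add: Vs_def C_def gram_scale rr)
  have gV: "gram (concat Vs) = (1 / (n * eps)) *\<^sub>R gram (concat Zs)"
    by (simp add: Vs_def map_concat[symmetric] gram_scale rr)
  have SC: "ln (det (mat 1 + gram (concat Vs))) \<le> (\<Sum>c<length Vs. ln (det (mat 1 + gram (Vs!c))))
    \<and> (orthC Vs \<longrightarrow> ln (det (mat 1 + gram (concat Vs))) = (\<Sum>c<length Vs. ln (det (mat 1 + gram (Vs!c)))))"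
    by (rule subC)
  have sumV: "(\<Sum>c<length Vs. ln (det (mat 1 + gram (Vs!c))))
      = (\<Sum>c<C. ln (det (mat 1 + (1 / (n * eps)) *\<^sub>R gram (Zs!c))))"
    unfolding lVs by (intro sum.cong) (auto simp: gVc)
  have RHS: "1/2 * (\<Sum>c<length Zs.
          ln (det (mat 1 + (1 / (real (length (concat Zs)) * eps)) *\<^sub>R gram (Zs!c)))
          - real (length (Zs!c)) / real (length (concat Zs))
            * ln (det (mat 1 + (1 / (real (length (Zs!c)) * eps)) *\<^sub>R gram (Zs!c))))
      = 1/2 * (\<Sum>c<C. ln (det (mat 1 + (1 / (n * eps)) *\<^sub>R gram (Zs!c))))
        - (\<Sum>c<C. w c * (1/2 * ln (det (Mc c))))"
    by (simp add: n_def C_def w_def Mc_def sum_subtractf right_diff_distrib sum_distrib_left mult_ac)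
  have TrR2: "TrR Zs eps = 1/2 * ln (det (mat 1 + gram (concat Vs))) - (\<Sum>c<C. w c * (1/2 * ln (det (Mc c))))"
    unfolding TrR_eq gV M0_def ..
  have part3: "TrR Zs eps \<le> 1/2 * (\<Sum>c<length Zs.
          ln (det (mat 1 + (1 / (real (length (concat Zs)) * eps)) *\<^sub>R gram (Zs!c)))
          - real (length (Zs!c)) / real (length (concat Zs))
            * ln (det (mat 1 + (1 / (real (length (Zs!c)) * eps)) *\<^sub>R gram (Zs!c))))"
    unfolding RHS TrR2 using SC sumV by linarith
  have part4: "TrR Zs eps = 1/2 * (\<Sum>c<length Zs.
          ln (det (mat 1 + (1 / (real (length (concat Zs)) * eps)) *\<^sub>R gram (Zs!c)))
          - real (length (Zs!c)) / real (length (concat Zs))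
            * ln (det (mat 1 + (1 / (real (length (Zs!c)) * eps)) *\<^sub>R gram (Zs!c))))"
    if h: "\<forall>c1 c2 k l. c1 < c2 \<and> c2 < length Zs \<and> k < length (Zs!c1) \<and> l < length (Zs!c2)
            \<longrightarrow> (Zs!c1)!k \<bullet> (Zs!c2)!l = 0"
  proof -
    have "orthC Vs" unfolding orthC_def
    proof (intro allI impI ballI)
      fix c1 c2 x y assume cc: "c1 < c2 \<and> c2 < length Vs" and x: "x \<in> set (Vs!c1)" and y: "y \<in> set (Vs!c2)"
      have c: "c1 < length Zs" "c2 < length Zs" using cc lVs by (auto simp: C_def)
      obtain k where k: "k < length (Zs!c1)" "x = r *\<^sub>R (Zs!c1)!k"
        using x c by (auto simp: Vs_def in_set_conv_nth)
      obtain l where l: "l < length (Zs!c2)" "y = r *\<^sub>R (Zs!c2)!l"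
        using y c by (auto simp: Vs_def in_set_conv_nth)
      have "(Zs!c1)!k \<bullet> (Zs!c2)!l = 0" using h cc c k l by blast
      then show "x \<bullet> y = 0" using k l by simp
    qed
    then show ?thesis unfolding RHS TrR2 using SC sumV by linarith
  qed
  show ?thesis using part1 part2 part3 part4 by blast
qed

end
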